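(* Let $H$ be either the English board $H_E$ or the French board $H_F$ (defined in the context). Let $b\subseteq H$ be a board position which is solvable and which is invariant under the $180^\circ$ rotation $(x,y)\mapsto(-x,-y)$. Equivalently, $b$ has one of the symmetry types 1–5: square symmetry, $90^\circ$ rotational symmetry, symmetry under both diagonal reflections, symmetry under both orthogonal reflections, or $180^\circ$ rotational symmetry. Then $b$ lies in position class A. Moreover, $b$ is solvable to the centre: there is a sequence of jumps from $b$ ending at the position consisting of the single peg at $(0,0)$.
   Context: Holes are points of $\mathbb{Z}^2$. - The English (33-hole) board is $H_E=\{(x,y)\in\mathbb{Z}^2: |x|\le 3,\ |y|\le 3,\ \min(|x|,|y|)\le 1\}$. - The French (37-hole) board is $H_F=H_E\cup\{(\pm2,\pm2)\}$. - A board position is a subset $b\subseteq H$, namely the set of holes occupied by pegs. - A jump: given $d\in\{(\pm1,0),(0,\pm1)\}$ and $p$ with $p,p+d,p+2d\in H$, $p,p+d\in b$ and $p+2d\notin b$, the jump replaces $b$ by $(b\setminus\{p,p+d\})\cup\{p+2d\}$. - A position is solvable if some finite sequence of jumps leads from it to a position with exactly one peg. Symmetry types. The symmetries of the board are the elements of the dihedral group of the square acting on $\mathbb{Z}^2$ about $(0,0)$. "Orthogonal reflections" are $(x,y)\mapsto(-x,y)$ and $(x,y)\mapsto(x,-y)$. "Diagonal reflections" are $(x,y)\mapsto(y,x)$ and $(x,y)\mapsto(-y,-x)$. Position class A. For a position $b$ and $i\in\{0,1,2\}$, let $N_i=|\{(x,y)\in b: x+y\equiv i \pmod 3\}|$ and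 $M_i=|\{(x,y)\in b: x-y\equiv i\pmod 3\}|$. The position $b$ lies in position class A if all of the following hold: - $N_1+N_2$ is even and $N_0+N_2$ and $N_0+N_1$ are odd; - $M_1+M_2$ is even and $M_0+M_2$ and $M_0+M_1$ are odd. This is the position class of the single peg at $(0,0)$. *)

theory Defs
  imports Main
begin

type_synonym hole = "int \<times> int"

definition english_board :: "hole set" where
  "english_board = {(x,y). \<bar>x\<bar> \<le> 3 \<and> \<bar>y\<bar> \<le> 3 \<and> min \<bar>x\<bar> \<bar>y\<bar> \<le> 1}"

definition french_board :: "hole set" where
  "french_board = english_board \<union> {(2,2), (2,-2), (-2,2), (-2,-2)}"

definition directions :: "hole set" where
  "directions = {(1,0), (-1,0), (0,1), (0,-1)}"

definition padd :: "hole \<Rightarrow> hole \<Rightarrow> hole" where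
  "padd p q = (fst p + fst q, snd p + snd q)"

definition jump :: "hole set \<Rightarrow> hole set \<Rightarrow> hole set \<Rightarrow> bool" where
  "jump H b b' \<longleftrightarrow> (\<exists>d p. d \<in> directions \<and>
      p \<in> H \<and> padd p d \<in> H \<and> padd p (padd d d) \<in> H \<and>
      p \<in> b \<and> padd p d \<in> b \<and> padd p (padd d d) \<notin> b \<and>
      b' = (b - {p, padd p d}) \<union> {padd p (padd d d)})"

definition solvable :: "hole set \<Rightarrow> hole set \<Rightarrow> bool" where
  "solvable H b \<longleftrightarrow> (\<exists>b'. (jump H)\<^sup>*\<^sup>* b b' \<and> card b' = 1)"

definition Ncount :: "hole set \<Rightarrow> int \<Rightarrow> nat" where
  "Ncount b i = card {(x,y) \<in> b. (x + y) mod 3 = i}"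

definition Mcount :: "hole set \<Rightarrow> int \<Rightarrow> nat" where
  "Mcount b i = card {(x,y) \<in> b. (x - y) mod 3 = i}"

definition classA :: "hole set \<Rightarrow> bool" where
  "classA b \<longleftrightarrow>
     even (Ncount b 1 + Ncount b 2) \<and> odd (Ncount b 0 + Ncount b 2) \<and> odd (Ncount b 0 + Ncount b 1) \<and>
     even (Mcount b 1 + Mcount b 2) \<and> odd (Mcount b 0 + Mcount b 2) \<and> odd (Mcount b 0 + Mcount b 1)"

end

theory Submission
  imports Defs
begin

definition cntf :: "(hole \<Rightarrow> int) \<Rightarrow> hole set \<Rightarrow> int \<Rightarrow> nat" where
  "cntf f b i = card {z \<in> b. f z mod 3 = i}"

lemma Ncount_cntf: "Ncount b i = cntf (\<lambda>z. fst z + snd z) b i"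
  unfolding Ncount_def cntf_def by (rule arg_cong[where f=card]) auto

lemma Mcount_cntf: "Mcount b i = cntf (\<lambda>z. fst z - snd z) b i"
  unfolding Mcount_def cntf_def by (rule arg_cong[where f=card]) auto

lemma card_jump:
  assumes "finite b" "p \<in> b" "r \<in> b" "p \<noteq> r" "q \<notin> b"
  shows "int (card {z \<in> (b - {p,r}) \<union> {q}. P z}) + (if P p then 1 else 0) + (if P r then 1 else 0)
       = int (card {z\<in>b. P z}) + (if P q then 1 else 0)"
proof -
  define A where "A = {z \<in> b - {p,r}. P z}"
  have fA: "finite A" using assms(1) unfolding A_def by auto
  have nq: "q \<notin> A" "p \<notin> A" "r \<notin> A" using assms unfolding A_def by auto
  have e1: "{z \<in> (b - {p,r}) \<union> {q}. P z} = (if P q then insert q A else A)"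
    unfolding A_def using assms by auto
  have e2: "{z\<in>b. P z} = (if P p then insert p else (\<lambda>X. X)) ((if P r then insert r else (\<lambda>X. X)) A)"
    unfolding A_def using assms by auto
  show ?thesis unfolding e1 e2
    using fA nq assms(4) by (cases "P p"; cases "P r"; cases "P q") simp_all
qed

lemma res3:
  fixes a e i :: int
  assumes "e = 1 \<or> e = -1" "i = 0 \<or> i = 1 \<or> i = 2"
  shows "(if a mod 3 = i then 1 else 0) + (if (a+e) mod 3 = i then 1 else 0)
         + (if (a+2*e) mod 3 = i then 1 else 0) = (1::int)"
  using assms by (auto split: if_splits; presburger)

lemma par_step:
  assumes "finite b" "p \<in> b" "r \<in> b" "p \<noteq> r" "q \<notin> b"
    "f r = f p + e" "f q = f p + 2*e" "e = 1 \<or> e = -1" "i = 0 \<or> i = 1 \<or> i = 2"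
  shows "odd (cntf f b i + cntf f ((b-{p,r}) \<union> {q}) i)"
proof -
  have c: "int (cntf f ((b-{p,r}) \<union> {q}) i) + (if f p mod 3 = i then 1 else 0) + (if f r mod 3 = i then 1 else 0)
       = int (cntf f b i) + (if f q mod 3 = i then 1 else 0)"
    unfolding cntf_def by (rule card_jump[OF assms(1-5)])
  have r: "(if f p mod 3 = i then 1 else 0) + (if f r mod 3 = i then 1 else 0)
         + (if f q mod 3 = i then 1 else 0) = (1::int)"
    unfolding assms(6,7) by (rule res3[OF assms(8,9)])
  have "int (cntf f b i + cntf f ((b-{p,r}) \<union> {q}) i) = 2 * int (cntf f b i) + 1
     - 2 * (if f p mod 3 = i then 1 else 0) - 2 * (if f r mod 3 = i then 1 else 0)"
    using c r by simp
  then have "odd (int (cntf f b i + cntf f ((b-{p,r}) \<union> {q}) i))" by presburger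
  then show ?thesis by simp
qed

definition clsf :: "(hole \<Rightarrow> int) \<Rightarrow> hole set \<Rightarrow> bool \<times> bool \<times> bool" where
  "clsf f b = (even (cntf f b 1 + cntf f b 2), even (cntf f b 0 + cntf f b 2), even (cntf f b 0 + cntf f b 1))"

definition cls :: "hole set \<Rightarrow> (bool \<times> bool \<times> bool) \<times> (bool \<times> bool \<times> bool)" where
  "cls b = (clsf (\<lambda>z. fst z + snd z) b, clsf (\<lambda>z. fst z - snd z) b)"

lemma par2: "odd ((a::nat) + a') \<Longrightarrow> odd (c + c') \<Longrightarrow> even (a' + c') = even (a + c)"
  by presburger

lemma clsf_step:
  assumes "finite b" "p \<in> b" "r \<in> b" "p \<noteq> r" "q \<notin> b"
    "f r = f p + e" "f q = f p + 2*e" "e = 1 \<or> e = -1"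
  shows "clsf f ((b-{p,r}) \<union> {q}) = clsf f b"
proof -
  have "odd (cntf f b i + cntf f ((b-{p,r}) \<union> {q}) i)" if "i = 0 \<or> i = 1 \<or> i = 2" for i
    by (rule par_step[OF assms that])
  then have o0: "odd (cntf f b 0 + cntf f ((b-{p,r}) \<union> {q}) 0)"
    and o1: "odd (cntf f b 1 + cntf f ((b-{p,r}) \<union> {q}) 1)"
    and o2: "odd (cntf f b 2 + cntf f ((b-{p,r}) \<union> {q}) 2)" by auto
  show ?thesis unfolding clsf_def using par2[OF o0 o1] par2[OF o0 o2] par2[OF o1 o2] by simp
qed

lemma dirs: "d \<in> directions \<Longrightarrow> d = (1,0) \<or> d = (-1,0) \<or> d = (0,1) \<or> d = (0,-1)"
  unfolding directions_def by auto

lemma jump_inv: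
  assumes "jump H b b'" "finite b"
  shows "finite b' \<and> cls b' = cls b"
proof -
  obtain d p where d: "d \<in> directions" and h: "p \<in> b" "padd p d \<in> b" "padd p (padd d d) \<notin> b"
      and b': "b' = (b - {p, padd p d}) \<union> {padd p (padd d d)}"
    using assms(1) unfolding jump_def by blast
  have ne: "p \<noteq> padd p d" using dirs[OF d] by (cases p) (auto simp: padd_def)
  have s: "(\<lambda>z. fst z + snd z) (padd p d) = (\<lambda>z. fst z + snd z) p + (fst d + snd d)"
          "(\<lambda>z. fst z + snd z) (padd p (padd d d)) = (\<lambda>z. fst z + snd z) p + 2 * (fst d + snd d)"
          "(\<lambda>z. fst z - snd z) (padd p d) = (\<lambda>z. fst z - snd z) p + (fst d - snd d)"
          "(\<lambda>z. fst z - snd z) (padd p (padd d d)) = (\<lambda>z. fst z - snd z) p + 2 * (fst d - snd d)"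
    by (auto simp: padd_def)
  have e: "fst d + snd d = 1 \<or> fst d + snd d = -1" "fst d - snd d = 1 \<or> fst d - snd d = -1"
    using dirs[OF d] by auto
  show ?thesis unfolding b' cls_def
    using clsf_step[OF assms(2) h(1,2) ne h(3) s(1,2) e(1)]
          clsf_step[OF assms(2) h(1,2) ne h(3) s(3,4) e(2)] assms(2) by simp
qed

lemma rt_inv:
  assumes "(jump H)\<^sup>*\<^sup>* b c" "finite b"
  shows "finite c \<and> cls c = cls b"
  using assms by (induction rule: rtranclp_induct) (auto dest: jump_inv)

lemma H_finite: "H = english_board \<or> H = french_board \<Longrightarrow> finite H"
proof -
  have "english_board \<subseteq> {-3..3} \<times> {-3..3}" unfolding english_board_def by auto
  then have fe: "finite english_board" by (rule finite_subset) auto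
  then have "finite french_board" unfolding french_board_def by simp
  then show "H = english_board \<or> H = french_board \<Longrightarrow> finite H" using fe by auto
qed

lemma sym_cnt:
  assumes sym: "\<forall>(x,y) \<in> b. (-x, -y) \<in> b" and f: "\<And>x y. f (-x,-y) = - f (x,y)"
  shows "cntf f b 1 = cntf f b 2"
proof -
  let ?n = "\<lambda>z::hole. (- fst z, - snd z)"
  have inj: "inj ?n" by (auto simp: inj_on_def)
  have "?n ` {z \<in> b. f z mod 3 = 1} = {z \<in> b. f z mod 3 = 2}"
  proof
    show "?n ` {z \<in> b. f z mod 3 = 1} \<subseteq> {z \<in> b. f z mod 3 = 2}"
    proof
      fix w assume "w \<in> ?n ` {z \<in> b. f z mod 3 = 1}"
      then obtain x y where w: "w = (-x,-y)" "(x,y) \<in> b" "f (x,y) mod 3 = 1" by auto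
      have "f w = - f (x,y)" using f w by simp
      then have "f w mod 3 = 2" using w(3) by presburger
      then show "w \<in> {z \<in> b. f z mod 3 = 2}" using sym w by auto
    qed
    show "{z \<in> b. f z mod 3 = 2} \<subseteq> ?n ` {z \<in> b. f z mod 3 = 1}"
    proof
      fix w assume "w \<in> {z \<in> b. f z mod 3 = 2}"
      then obtain x y where w: "w = (x,y)" "(x,y) \<in> b" "f (x,y) mod 3 = 2" by (cases w) auto
      have "f (-x,-y) = - f (x,y)" using f by simp
      then have "f (-x,-y) mod 3 = 1" using w(3) by presburger
      moreover have "(-x,-y) \<in> b" using sym w by auto
      ultimately show "w \<in> ?n ` {z \<in> b. f z mod 3 = 1}" using w
        by (auto intro!: image_eqI[where x="(-x,-y)"])
    qed
  qed
  then show ?thesis unfolding cntf_def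
    by (metis (no_types, lifting) card_image inj inj_on_subset subset_UNIV)
qed

lemma cntf_single: "cntf f {q} i = (if f q mod 3 = i then 1 else 0)"
proof -
  have "{z \<in> {q}. f z mod 3 = i} = (if f q mod 3 = i then {q} else {})" by auto
  then show ?thesis unfolding cntf_def by simp
qed

lemma clsf_single_first:
  assumes "fst (clsf f {q})"
  shows "f q mod 3 = 0"
proof -
  have "f q mod 3 = 0 \<or> f q mod 3 = 1 \<or> f q mod 3 = 2" by presburger
  then show ?thesis using assms unfolding clsf_def cntf_single by auto
qed

lemma clsf_single0: "f q mod 3 = 0 \<Longrightarrow> clsf f {q} = (True, False, False)"
  unfolding clsf_def cntf_single by auto

lemma classA_iff: "classA b \<longleftrightarrow> cls b = ((True,False,False),(True,False,False))"
  unfolding classA_def cls_def clsf_def Ncount_cntf Mcount_cntf by auto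

lemma endgame:
  assumes "H = english_board \<or> H = french_board" "p \<in> H" "d \<in> directions"
    "(fst q + snd q) mod 3 = 0" "(fst q - snd q) mod 3 = 0" "q = padd p (padd d d)" "q \<noteq> (0,0)" "q \<in> H"
  shows "p = d"
proof -
  obtain x y where p: "p = (x,y)" by (cases p)
  have hp: "(\<bar>x\<bar> \<le> 3 \<and> \<bar>y\<bar> \<le> 3 \<and> min \<bar>x\<bar> \<bar>y\<bar> \<le> 1) \<or> (x,y) \<in> {(2,2), (2,-2), (-2,2), (-2,-2)}"
    using assms(1,2) p unfolding english_board_def french_board_def by auto
  have hl: "-3 \<le> x \<and> x \<le> 3 \<and> -3 \<le> y \<and> y \<le> 3 \<and>
      ((-1 \<le> x \<and> x \<le> 1) \<or> (-1 \<le> y \<and> y \<le> 1) \<or> ((x = 2 \<or> x = -2) \<and> (y = 2 \<or> y = -2)))"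
    using hp by (auto simp: min_def split: if_splits)
  obtain u v where qq: "q = (u,v)" by (cases q)
  have hq0: "(\<bar>u\<bar> \<le> 3 \<and> \<bar>v\<bar> \<le> 3 \<and> min \<bar>u\<bar> \<bar>v\<bar> \<le> 1) \<or> (u,v) \<in> {(2,2), (2,-2), (-2,2), (-2,-2)}"
    using assms(1,8) qq unfolding english_board_def french_board_def by auto
  have hq: "-3 \<le> u \<and> u \<le> 3 \<and> -3 \<le> v \<and> v \<le> 3 \<and>
      ((-1 \<le> u \<and> u \<le> 1) \<or> (-1 \<le> v \<and> v \<le> 1) \<or> ((u = 2 \<or> u = -2) \<and> (v = 2 \<or> v = -2)))"
    using hq0 by (auto simp: min_def split: if_splits)
  have uv: "u = x + 2 * fst d" "v = y + 2 * snd d" using assms(6) p qq by (auto simp: padd_def)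
  have q: "q = (x + 2 * fst d, y + 2 * snd d)" using assms(6) p by (simp add: padd_def)
  from dirs[OF assms(3)] show ?thesis
  proof (elim disjE)
    assume "d = (1,0)" then show ?thesis using hl hq uv assms(4,5,7) unfolding p q by simp presburger
  next
    assume "d = (-1,0)" then show ?thesis using hl hq uv assms(4,5,7) unfolding p q by simp presburger
  next
    assume "d = (0,1)" then show ?thesis using hl hq uv assms(4,5,7) unfolding p q by simp presburger
  next
    assume "d = (0,-1)" then show ?thesis using hl hq uv assms(4,5,7) unfolding p q by simp presburger
  qed
qed

lemma center_in: "H = english_board \<or> H = french_board \<Longrightarrow> (0,0) \<in> H"
  unfolding english_board_def french_board_def by auto

theorem theorem1:
  fixes H b :: "hole set"
  assumes "H = english_board \<or> H = french_board"
    and "b \<subseteq> H"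
    and "solvable H b"
    and "\<forall>(x,y) \<in> b. (-x, -y) \<in> b"
  shows "classA b \<and> (jump H)\<^sup>*\<^sup>* b {(0,0)}"
proof -
  have fb: "finite b" using H_finite[OF assms(1)] assms(2) finite_subset by blast
  obtain b' where rt: "(jump H)\<^sup>*\<^sup>* b b'" and c1: "card b' = 1"
    using assms(3) unfolding solvable_def by blast
  obtain q where bq: "b' = {q}" using c1 card_1_singletonE by blast
  have clseq: "cls {q} = cls b" using rt_inv[OF rt fb] bq by simp
  have s1: "cntf (\<lambda>z. fst z + snd z) b 1 = cntf (\<lambda>z. fst z + snd z) b 2"
    by (rule sym_cnt[OF assms(4)]) simp
  have s2: "cntf (\<lambda>z. fst z - snd z) b 1 = cntf (\<lambda>z. fst z - snd z) b 2"
    by (rule sym_cnt[OF assms(4)]) simp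
  have "fst (clsf (\<lambda>z. fst z + snd z) {q})" "fst (clsf (\<lambda>z. fst z - snd z) {q})"
    using clseq s1 s2 unfolding cls_def clsf_def by auto
  then have m1: "(fst q + snd q) mod 3 = 0" and m2: "(fst q - snd q) mod 3 = 0"
    using clsf_single_first by fastforce+
  have e1: "clsf (\<lambda>z. fst z + snd z) b = clsf (\<lambda>z. fst z + snd z) {q}"
    and e2: "clsf (\<lambda>z. fst z - snd z) b = clsf (\<lambda>z. fst z - snd z) {q}"
    using clseq unfolding cls_def by auto
  have cA: "classA b" unfolding classA_iff cls_def e1 e2
    using clsf_single0[of "\<lambda>z. fst z + snd z" q] clsf_single0[of "\<lambda>z. fst z - snd z" q] m1 m2
    by simp
  have "(jump H)\<^sup>*\<^sup>* b {(0,0)}"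
  proof (cases "q = (0,0)")
    case True then show ?thesis using rt bq by simp
  next
    case False
    show ?thesis
    proof (cases "b = {q}")
      case True
      obtain x y where q: "q = (x,y)" by (cases q)
      have "(-x,-y) \<in> b" using assms(4) True q by auto
      then have "q = (0,0)" using True q by auto
      then show ?thesis using False by simp
    next
      case bne: False
      from rt bq obtain c where rc: "(jump H)\<^sup>*\<^sup>* b c" and jc: "jump H c {q}"
        using bne by (metis rtranclp.cases)
      obtain d p where d: "d \<in> directions" and h: "p \<in> H" "padd p d \<in> H" "padd p (padd d d) \<in> H"
          "p \<in> c" "padd p d \<in> c" "padd p (padd d d) \<notin> c"
          and e: "{q} = (c - {p, padd p d}) \<union> {padd p (padd d d)}"
        using jc unfolding jump_def by blast
      have qe: "q = padd p (padd d d)" using e by auto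
      have ce: "c = {p, padd p d}" using e h(4-6) qe by auto
      have pd: "p = d" by (rule endgame[OF assms(1) h(1) d m1 m2 qe False h(3)[folded qe]])
      have "jump H c {(0,0)}"
        unfolding jump_def
      proof (intro exI conjI)
        show "(- fst d, - snd d) \<in> directions" using dirs[OF d] unfolding directions_def by auto
        show "padd d d \<in> H" using h(2) pd by simp
        show "padd (padd d d) (- fst d, - snd d) \<in> H" using h(1) pd by (simp add: padd_def)
        show "padd (padd d d) (padd (- fst d, - snd d) (- fst d, - snd d)) \<in> H"
          using center_in[OF assms(1)] by (simp add: padd_def)
        show "padd d d \<in> c" using ce pd by simp
        show "padd (padd d d) (- fst d, - snd d) \<in> c" using ce pd by (simp add: padd_def)
        show "padd (padd d d) (padd (- fst d, - snd d) (- fst d, - snd d)) \<notin> c"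
          using ce pd dirs[OF d] by (auto simp: padd_def)
        show "{(0, 0)} = c - {padd d d, padd (padd d d) (- fst d, - snd d)} \<union>
            {padd (padd d d) (padd (- fst d, - snd d) (- fst d, - snd d))}"
          using ce pd by (auto simp: padd_def)
      qed
      then show ?thesis using rc by simp
    qed
  qed
  then show ?thesis using cA by simp
qed

end
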